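(* Let $\mu$ be a left fuzzy $\Gamma$-hyperideal of a fuzzy $\Gamma$-hypersemigroup $(M,\circ)$. Then (i) $\mu\circ\gamma\circ m$ is a left fuzzy $\Gamma$-hyperideal of $(M,\circ)$ for all $m\in M$, $\gamma\in\Gamma$; (ii) $\mu\circ\gamma\circ\chi_M$ is a left fuzzy $\Gamma$-hyperideal of $(M,\circ)$ for all $\gamma\in\Gamma$.
   Context: $M,\Gamma$ are nonempty sets; a fuzzy subset of $M$ is a map $M\to[0,1]$. A fuzzy $\Gamma$-hyperoperation assigns to each $(a,\gamma,b)\in M\times\Gamma\times M$ a fuzzy subset $a\circ\gamma\circ b$. For $a\in M$ and fuzzy $\mu$: $(a\circ\gamma\circ\mu)(r)=\bigvee_{t\in M}((a\circ\gamma\circ t)(r)\wedge\mu(t))$ if $\mu\ne0$, else $0$; $(\mu\circ\gamma\circ a)(r)=\bigvee_{t\in M}(\mu(t)\wedge(t\circ\gamma\circ a)(r))$ if $\mu\ne0$, else $0$. For fuzzy $\mu,\nu$: $(\mu\circ\gamma\circ\nu)(t)=\bigvee_{p,q\in M}(\mu(p)\wedge(p\circ\gamma\circ q)(t)\wedge\nu(q))$. $(M,\circ)$ is a fuzzy $\Gamma$-hypersemigroup if $(a\circ\alpha\circ b)\circ\beta\circ c=a\circ\alpha\circ(b\circ\beta\circ c)$ for all $a,b,c\in M$, $\alpha,\beta\in\Gamma$. $\chi_M$ is the constant function $1$ on $M$. For fuzzy sets, $\mu\subseteq\nu$ means $\mu(x)\le\nu(x)$ for all $x$. A fuzzy subset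 $\mu$ is a left fuzzy $\Gamma$-hyperideal if $a\circ\gamma\circ\mu\subseteq\mu$ for all $a\in M$, $\gamma\in\Gamma$. *)

theory Defs
  imports Complex_Main
begin

text \<open>M is modelled by the type 'm, Gamma by the type 'g (types are nonempty).\<close>

definition fuzzy_set :: "('m \<Rightarrow> real) \<Rightarrow> bool" where
  "fuzzy_set \<mu> \<longleftrightarrow> (\<forall>x. 0 \<le> \<mu> x \<and> \<mu> x \<le> 1)"

definition fuzzy_hyperop :: "('m \<Rightarrow> 'g \<Rightarrow> 'm \<Rightarrow> ('m \<Rightarrow> real)) \<Rightarrow> bool" where
  "fuzzy_hyperop hop \<longleftrightarrow> (\<forall>a g b. fuzzy_set (hop a g b))"

definition elem_fuzzy :: "('m \<Rightarrow> 'g \<Rightarrow> 'm \<Rightarrow> ('m \<Rightarrow> real)) \<Rightarrow> 'm \<Rightarrow> 'g \<Rightarrow> ('m \<Rightarrow> real) \<Rightarrow> ('m \<Rightarrow> real)" where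
  "elem_fuzzy hop a g \<mu> =
     (if \<mu> = (\<lambda>_. 0) then (\<lambda>_. 0) else (\<lambda>r. SUP t. min (hop a g t r) (\<mu> t)))"

definition fuzzy_elem :: "('m \<Rightarrow> 'g \<Rightarrow> 'm \<Rightarrow> ('m \<Rightarrow> real)) \<Rightarrow> ('m \<Rightarrow> real) \<Rightarrow> 'g \<Rightarrow> 'm \<Rightarrow> ('m \<Rightarrow> real)" where
  "fuzzy_elem hop \<mu> g a =
     (if \<mu> = (\<lambda>_. 0) then (\<lambda>_. 0) else (\<lambda>r. SUP t. min (\<mu> t) (hop t g a r)))"

definition fuzzy_fuzzy :: "('m \<Rightarrow> 'g \<Rightarrow> 'm \<Rightarrow> ('m \<Rightarrow> real)) \<Rightarrow> ('m \<Rightarrow> real) \<Rightarrow> 'g \<Rightarrow> ('m \<Rightarrow> real) \<Rightarrow> ('m \<Rightarrow> real)" where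
  "fuzzy_fuzzy hop \<mu> g \<nu> = (\<lambda>t. SUP (p, q). min (\<mu> p) (min (hop p g q t) (\<nu> q)))"

definition fuzzy_gamma_hypersemigroup :: "('m \<Rightarrow> 'g \<Rightarrow> 'm \<Rightarrow> ('m \<Rightarrow> real)) \<Rightarrow> bool" where
  "fuzzy_gamma_hypersemigroup hop \<longleftrightarrow> fuzzy_hyperop hop \<and>
     (\<forall>a b c \<alpha> \<beta>. fuzzy_elem hop (hop a \<alpha> b) \<beta> c = elem_fuzzy hop a \<alpha> (hop b \<beta> c))"

definition chi_M :: "'m \<Rightarrow> real" where
  "chi_M = (\<lambda>_. 1)"

definition left_fuzzy_gamma_hyperideal :: "('m \<Rightarrow> 'g \<Rightarrow> 'm \<Rightarrow> ('m \<Rightarrow> real)) \<Rightarrow> ('m \<Rightarrow> real) \<Rightarrow> bool" where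
  "left_fuzzy_gamma_hyperideal hop \<mu> \<longleftrightarrow> fuzzy_set \<mu> \<and>
     (\<forall>a g x. elem_fuzzy hop a g \<mu> x \<le> \<mu> x)"

end

theory Submission
  imports Defs
begin

lemma sup_le: "(\<And>t. f t \<le> c) \<Longrightarrow> (SUP t. f t) \<le> (c::real)"
  by (rule cSUP_least) auto

lemma le_sup: "(\<And>t. f t \<le> (B::real)) \<Longrightarrow> f t \<le> (SUP t. f t)"
  by (rule cSUP_upper) (auto intro!: bdd_aboveI2[where M=B])

lemma min_sup_le:
  assumes "\<And>t. f t \<le> (B::real)" "\<And>t. min c (f t) \<le> d"
  shows "min c (SUP t. f t) \<le> d"
proof (cases "c \<le> d")
  case True then show ?thesis by linarith
next
  case False
  have "\<And>t. f t \<le> d" using assms(2) False by (metis min_le_iff_disj)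
  then have "(SUP t. f t) \<le> d" by (rule sup_le)
  then show ?thesis by linarith
qed

lemma fe_lower:
  assumes "fuzzy_hyperop hop" "fuzzy_set \<mu>"
  shows "min (\<mu> t) (hop t g a r) \<le> fuzzy_elem hop \<mu> g a r"
proof (cases "\<mu> = (\<lambda>_. 0)")
  case True then show ?thesis using assms by (simp add: fuzzy_elem_def fuzzy_hyperop_def fuzzy_set_def)
next
  case False
  have "\<And>t. min (\<mu> t) (hop t g a r) \<le> 1" using assms(2) by (simp add: fuzzy_set_def min_le_iff_disj)
  then show ?thesis using False le_sup[of "\<lambda>t. min (\<mu> t) (hop t g a r)" 1 t] by (simp add: fuzzy_elem_def)
qed

lemma ef_lower:
  assumes "fuzzy_hyperop hop" "fuzzy_set \<mu>"
  shows "min (hop a g t r) (\<mu> t) \<le> elem_fuzzy hop a g \<mu> r"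
proof (cases "\<mu> = (\<lambda>_. 0)")
  case True then show ?thesis using assms by (simp add: elem_fuzzy_def fuzzy_hyperop_def fuzzy_set_def)
next
  case False
  have "\<And>t. min (hop a g t r) (\<mu> t) \<le> 1" using assms(2) by (simp add: fuzzy_set_def min_le_iff_disj)
  then show ?thesis using False le_sup[of "\<lambda>t. min (hop a g t r) (\<mu> t)" 1 t] by (simp add: elem_fuzzy_def)
qed

lemma fe_upper:
  assumes "\<And>t. min (\<mu> t) (hop t g a r) \<le> c" "0 \<le> c"
  shows "fuzzy_elem hop \<mu> g a r \<le> c"
  using assms by (simp add: fuzzy_elem_def sup_le)

lemma ef_upper:
  assumes "\<And>t. min (hop a g t r) (\<mu> t) \<le> c" "0 \<le> c"
  shows "elem_fuzzy hop a g \<mu> r \<le> c"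
  using assms by (simp add: elem_fuzzy_def sup_le)

lemma fe_fuzzy:
  assumes "fuzzy_hyperop hop" "fuzzy_set \<mu>"
  shows "fuzzy_set (fuzzy_elem hop \<mu> g a)"
  unfolding fuzzy_set_def
proof
  fix r
  have "min (\<mu> t) (hop t g a r) \<ge> 0" for t using assms by (simp add: fuzzy_set_def fuzzy_hyperop_def)
  moreover have "min (\<mu> t) (hop t g a r) \<le> 1" for t using assms by (simp add: fuzzy_set_def min_le_iff_disj)
  ultimately show "0 \<le> fuzzy_elem hop \<mu> g a r \<and> fuzzy_elem hop \<mu> g a r \<le> 1"
    using fe_lower[OF assms] fe_upper[of \<mu> hop g a r 1]
    by (meson order_trans zero_le_one)
qed

lemma ff_lower:
  assumes "fuzzy_hyperop hop" "fuzzy_set \<mu>"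
  shows "min (\<mu> p) (min (hop p g q t) (chi_M q)) \<le> fuzzy_fuzzy hop \<mu> g chi_M t"
proof -
  have "\<And>x. (\<lambda>(p,q). min (\<mu> p) (min (hop p g q t) (chi_M q))) x \<le> 1"
    using assms(2) by (auto simp: fuzzy_set_def min_le_iff_disj)
  from le_sup[of "\<lambda>(p,q). min (\<mu> p) (min (hop p g q t) (chi_M q))" 1 "(p,q)", OF this] show ?thesis by (simp add: fuzzy_fuzzy_def)
qed

lemma ff_fuzzy:
  assumes "fuzzy_hyperop hop" "fuzzy_set \<mu>"
  shows "fuzzy_set (fuzzy_fuzzy hop \<mu> g chi_M)"
  unfolding fuzzy_set_def
proof
  fix t
  obtain p q :: 'a where True by simp
  have "0 \<le> min (\<mu> p) (min (hop p g q t) (chi_M q))" using assms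
    by (simp add: fuzzy_set_def fuzzy_hyperop_def chi_M_def)
  then have "0 \<le> fuzzy_fuzzy hop \<mu> g chi_M t" using ff_lower[OF assms] order_trans by blast
  moreover have "fuzzy_fuzzy hop \<mu> g chi_M t \<le> 1"
    unfolding fuzzy_fuzzy_def using assms(2)
    by (intro sup_le) (auto simp: fuzzy_set_def min_le_iff_disj)
  ultimately show "0 \<le> fuzzy_fuzzy hop \<mu> g chi_M t \<and> fuzzy_fuzzy hop \<mu> g chi_M t \<le> 1" by simp
qed

theorem theorem4p7:
  fixes hop :: "'m \<Rightarrow> 'g \<Rightarrow> 'm \<Rightarrow> ('m \<Rightarrow> real)" and \<mu> :: "'m \<Rightarrow> real"
  assumes "fuzzy_gamma_hypersemigroup hop"
    and "left_fuzzy_gamma_hyperideal hop \<mu>"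
  shows "(\<forall>m \<gamma>. left_fuzzy_gamma_hyperideal hop (fuzzy_elem hop \<mu> \<gamma> m))
    \<and> (\<forall>\<gamma>. left_fuzzy_gamma_hyperideal hop (fuzzy_fuzzy hop \<mu> \<gamma> chi_M))"
proof -
  have H: "fuzzy_hyperop hop" and A: "\<And>a b c \<alpha> \<beta>. fuzzy_elem hop (hop a \<alpha> b) \<beta> c = elem_fuzzy hop a \<alpha> (hop b \<beta> c)"
    using assms(1) by (auto simp: fuzzy_gamma_hypersemigroup_def)
  have F: "fuzzy_set \<mu>" and I: "\<And>a g x. elem_fuzzy hop a g \<mu> x \<le> \<mu> x"
    using assms(2) by (auto simp: left_fuzzy_gamma_hyperideal_def)
  have Hs: "\<And>a g b. fuzzy_set (hop a g b)" using H by (simp add: fuzzy_hyperop_def)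
  have hb: "\<And>a g b x. 0 \<le> hop a g b x \<and> hop a g b x \<le> 1" using Hs by (simp add: fuzzy_set_def)
  have mb: "\<And>x. 0 \<le> \<mu> x \<and> \<mu> x \<le> 1" using F by (simp add: fuzzy_set_def)
  have key: "min (\<mu> t) (min (hop a g s x) (hop t \<gamma> m s)) \<le> fuzzy_elem hop \<mu> \<gamma> m x"
    for t a g s x \<gamma> m
  proof -
    have "min (hop a g s x) (hop t \<gamma> m s) \<le> elem_fuzzy hop a g (hop t \<gamma> m) x"
      by (rule ef_lower[OF H Hs])
    also have "\<dots> = fuzzy_elem hop (hop a g t) \<gamma> m x" by (simp add: A)
    finally have 1: "min (hop a g s x) (hop t \<gamma> m s) \<le> fuzzy_elem hop (hop a g t) \<gamma> m x" .
    have 2: "min (\<mu> t) (fuzzy_elem hop (hop a g t) \<gamma> m x) \<le> fuzzy_elem hop \<mu> \<gamma> m x"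
    proof (cases "hop a g t = (\<lambda>_. 0)")
      case True
      have "0 \<le> fuzzy_elem hop \<mu> \<gamma> m x" using fe_fuzzy[OF H F] by (simp add: fuzzy_set_def)
      then show ?thesis using True by (simp add: fuzzy_elem_def)
    next
      case False
      have "min (\<mu> t) (SUP u. min (hop a g t u) (hop u \<gamma> m x)) \<le> fuzzy_elem hop \<mu> \<gamma> m x"
      proof (rule min_sup_le)
        show "min (hop a g t u) (hop u \<gamma> m x) \<le> 1" for u using hb by (simp add: min_le_iff_disj)
        fix u
        have "min (hop a g t u) (\<mu> t) \<le> \<mu> u" using ef_lower[OF H F] I order_trans by blast
        then have "min (\<mu> t) (min (hop a g t u) (hop u \<gamma> m x)) \<le> min (\<mu> u) (hop u \<gamma> m x)"
          unfolding min_def by (auto split: if_splits)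
        also have "\<dots> \<le> fuzzy_elem hop \<mu> \<gamma> m x" by (rule fe_lower[OF H F])
        finally show "min (\<mu> t) (min (hop a g t u) (hop u \<gamma> m x)) \<le> fuzzy_elem hop \<mu> \<gamma> m x" .
      qed
      then show ?thesis using False by (simp add: fuzzy_elem_def)
    qed
    have "min (\<mu> t) (min (hop a g s x) (hop t \<gamma> m s)) \<le> min (\<mu> t) (fuzzy_elem hop (hop a g t) \<gamma> m x)"
      using 1 by (simp add: min_def)
    with 2 show ?thesis by linarith
  qed
  have P1: "left_fuzzy_gamma_hyperideal hop (fuzzy_elem hop \<mu> \<gamma> m)" for m \<gamma>
    unfolding left_fuzzy_gamma_hyperideal_def
  proof (intro conjI allI)
    show "fuzzy_set (fuzzy_elem hop \<mu> \<gamma> m)" by (rule fe_fuzzy[OF H F])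
    fix a g x
    have nn: "0 \<le> fuzzy_elem hop \<mu> \<gamma> m x" using fe_fuzzy[OF H F] by (simp add: fuzzy_set_def)
    show "elem_fuzzy hop a g (fuzzy_elem hop \<mu> \<gamma> m) x \<le> fuzzy_elem hop \<mu> \<gamma> m x"
    proof (rule ef_upper[OF _ nn])
      fix s
      show "min (hop a g s x) (fuzzy_elem hop \<mu> \<gamma> m s) \<le> fuzzy_elem hop \<mu> \<gamma> m x"
      proof (cases "\<mu> = (\<lambda>_. 0)")
        case True then show ?thesis using nn hb by (simp add: fuzzy_elem_def)
      next
        case False
        have "min (hop a g s x) (SUP t. min (\<mu> t) (hop t \<gamma> m s)) \<le> fuzzy_elem hop \<mu> \<gamma> m x"
        proof (rule min_sup_le)
          show "min (\<mu> t) (hop t \<gamma> m s) \<le> 1" for t using mb by (simp add: min_le_iff_disj)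
          fix t
          have "min (hop a g s x) (min (\<mu> t) (hop t \<gamma> m s)) = min (\<mu> t) (min (hop a g s x) (hop t \<gamma> m s))"
            by (simp add: min_def)
          then show "min (hop a g s x) (min (\<mu> t) (hop t \<gamma> m s)) \<le> fuzzy_elem hop \<mu> \<gamma> m x"
            using key by simp
        qed
        then show ?thesis using False by (simp add: fuzzy_elem_def)
      qed
    qed
  qed
  have P2: "left_fuzzy_gamma_hyperideal hop (fuzzy_fuzzy hop \<mu> \<gamma> chi_M)" for \<gamma>
    unfolding left_fuzzy_gamma_hyperideal_def
  proof (intro conjI allI)
    show "fuzzy_set (fuzzy_fuzzy hop \<mu> \<gamma> chi_M)" by (rule ff_fuzzy[OF H F])
    fix a g x
    have nn: "0 \<le> fuzzy_fuzzy hop \<mu> \<gamma> chi_M x" using ff_fuzzy[OF H F] by (simp add: fuzzy_set_def)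
    have fe_ff: "fuzzy_elem hop \<mu> \<gamma> q x \<le> fuzzy_fuzzy hop \<mu> \<gamma> chi_M x" for q
    proof (rule fe_upper[OF _ nn])
      fix u
      show "min (\<mu> u) (hop u \<gamma> q x) \<le> fuzzy_fuzzy hop \<mu> \<gamma> chi_M x"
        using ff_lower[OF H F, of u \<gamma> q x] by (simp add: chi_M_def hb min_absorb1)
    qed
    show "elem_fuzzy hop a g (fuzzy_fuzzy hop \<mu> \<gamma> chi_M) x \<le> fuzzy_fuzzy hop \<mu> \<gamma> chi_M x"
    proof (rule ef_upper[OF _ nn])
      fix s
      let ?f = "\<lambda>(p,q). min (\<mu> p) (min (hop p \<gamma> q s) (chi_M q))"
      have "min (hop a g s x) (SUP pq. ?f pq) \<le> fuzzy_fuzzy hop \<mu> \<gamma> chi_M x"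
      proof (rule min_sup_le)
        show "?f pq \<le> 1" for pq using mb by (auto simp: min_le_iff_disj split: prod.splits)
        fix pq :: "'m \<times> 'm"
        obtain p q where pq: "pq = (p,q)" by fastforce
        have "min (hop a g s x) (?f pq) = min (\<mu> p) (min (hop a g s x) (hop p \<gamma> q s))"
          using pq hb by (simp add: chi_M_def min_absorb1 min_def)
        also have "\<dots> \<le> fuzzy_elem hop \<mu> \<gamma> q x" by (rule key)
        also have "\<dots> \<le> fuzzy_fuzzy hop \<mu> \<gamma> chi_M x" by (rule fe_ff)
        finally show "min (hop a g s x) (?f pq) \<le> fuzzy_fuzzy hop \<mu> \<gamma> chi_M x" .
      qed
      then show "min (hop a g s x) (fuzzy_fuzzy hop \<mu> \<gamma> chi_M s) \<le> fuzzy_fuzzy hop \<mu> \<gamma> chi_M x"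
        by (simp add: fuzzy_fuzzy_def)
    qed
  qed
  show ?thesis using P1 P2 by blast
qed

end
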